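(* Let $k\ge1$ be an integer. Define \[ G_k=\bigcup_{n=0}^k T_a^{-n}(0)\cap\{x:\varkappa_a(x)\ge k\},\qquad D_k=\bigcup_{n=0}^{k-1}T_a^{-n}\Big(\frac{2a-1}{1-a}\Big)\cup\Big\{\frac1{1-a}\Big\}, \] and $g_k(x)=\max\{y\in G_k:y\le x\}$. (a) For any $a\in(\frac12,\frac23)$: the set $\{x:\varkappa_a(x)\ge k\}$ is a union of finitely many disjoint intervals $\{[g_k(y),y]:y\in D_k\}$; the set of left endpoints of these intervals is $G_k$; and on each of these intervals the functions $\delta_0(x),\dots,\delta_{k-1}(x)$ are constant and $T_a^1(x),\dots,T_a^k(x)$ are continuous and strictly increasing. (b) The assertions of (a) remain valid for $a=\frac23$ if the family of intervals is replaced by $\{[g_k(y-),y):y\in D_k,\,y\neq3\}\cup\{[g_k(3),3]\}$, where $g_k(y-)$ denotes the left limit of $g_k$ at $y$.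
   Context: For $a\in[\frac12,\frac23]$ let $I_a=\big(\frac{2a-1}{1-a},1\big)$ and define $T_a$ on $[0,\frac1{1-a}]\setminus I_a$ by $T_a(x)=\frac1a(x+1)$ for $0\le x\le\frac{2a-1}{1-a}$ and $T_a(x)=\frac1a(x-1)$ for $1\le x\le\frac1{1-a}$; for $a=\frac23$ set $T_{2/3}(1)=0$. For $x\in[0,\frac1{1-a}]$ let $\varkappa_a(x)=\inf\{k\ge0:T_a^k(x)\in I_a\}$ ($\inf\emptyset=\infty$), so $T_a^k(x)$ is defined iff $k\le\varkappa_a(x)$; $T_a^{-n}(z)$ denotes the set of $x$ with $\varkappa_a(x)\ge n$ and $T_a^n(x)=z$. For $0\le k\le\varkappa_a(x)$ put $\delta_k(x)=\mathbb 1\{T_a^k(x)<1\}$. *)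

theory Defs
  imports "HOL-Analysis.Analysis" "HOL-Library.Extended_Nat"
begin

definition Ia :: "real \<Rightarrow> real set" where
  "Ia a = {(2*a-1)/(1-a) <..< 1}"

definition Dom :: "real \<Rightarrow> real set" where
  "Dom a = {0 .. 1/(1-a)}"

text \<open>The map T_a, written as a total function. On [0,(2a-1)/(1-a)] (excluding x = 1,
  which only matters for a = 2/3) it is (x+1)/a, otherwise (x-1)/a; in particular
  T_{2/3}(1) = 0. Values on I_a or outside the domain are irrelevant (never used).\<close>
definition Ta :: "real \<Rightarrow> real \<Rightarrow> real" where
  "Ta a x = (if x < 1 \<and> x \<le> (2*a-1)/(1-a) then (x+1)/a else (x-1)/a)"

definition kappa :: "real \<Rightarrow> real \<Rightarrow> enat" where
  "kappa a x = (if \<exists>k. (Ta a ^^ k) x \<in> Ia a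
                then enat (LEAST k. (Ta a ^^ k) x \<in> Ia a) else \<infinity>)"

definition Tinv :: "real \<Rightarrow> nat \<Rightarrow> real \<Rightarrow> real set" where
  "Tinv a n z = {x \<in> Dom a. kappa a x \<ge> enat n \<and> (Ta a ^^ n) x = z}"

definition delta :: "real \<Rightarrow> nat \<Rightarrow> real \<Rightarrow> nat" where
  "delta a k x = (if (Ta a ^^ k) x < 1 then 1 else 0)"

definition Gk :: "real \<Rightarrow> nat \<Rightarrow> real set" where
  "Gk a k = (\<Union>n\<in>{0..k}. Tinv a n 0) \<inter> {x \<in> Dom a. kappa a x \<ge> enat k}"

definition Dk :: "real \<Rightarrow> nat \<Rightarrow> real set" where
  "Dk a k = (\<Union>n\<in>{0..<k}. Tinv a n ((2*a-1)/(1-a))) \<union> {1/(1-a)}"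

definition gk :: "real \<Rightarrow> nat \<Rightarrow> real \<Rightarrow> real" where
  "gk a k x = Max {y \<in> Gk a k. y \<le> x}"

end

theory Submission
  imports Defs
begin


definition Sk :: "real \<Rightarrow> nat \<Rightarrow> real set" where
  "Sk a j = {x \<in> Dom a. \<forall>i<j. (Ta a ^^ i) x \<notin> Ia a}"

definition br :: "real \<Rightarrow> real \<Rightarrow> bool" where
  "br a x \<longleftrightarrow> x < 1 \<and> x \<le> (2*a-1)/(1-a)"

lemma Ta_br: "Ta a x = (if br a x then (x+1)/a else (x-1)/a)"
  by (simp add: Ta_def br_def)

lemma kappa_ge: "kappa a x \<ge> enat j \<longleftrightarrow> (\<forall>i<j. (Ta a ^^ i) x \<notin> Ia a)"
proof (cases "\<exists>k. (Ta a ^^ k) x \<in> Ia a")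
  case True
  then have L: "(Ta a ^^ (LEAST k. (Ta a ^^ k) x \<in> Ia a)) x \<in> Ia a" by (rule LeastI_ex)
  show ?thesis
  proof
    assume "kappa a x \<ge> enat j"
    then have "j \<le> (LEAST k. (Ta a ^^ k) x \<in> Ia a)" using True by (simp add: kappa_def)
    then show "\<forall>i<j. (Ta a ^^ i) x \<notin> Ia a"
      using not_less_Least[where P="\<lambda>k. (Ta a ^^ k) x \<in> Ia a"] by (meson less_le_trans)
  next
    assume H: "\<forall>i<j. (Ta a ^^ i) x \<notin> Ia a"
    have "j \<le> (LEAST k. (Ta a ^^ k) x \<in> Ia a)"
      using H L by (metis not_le)
    then show "kappa a x \<ge> enat j" using True by (simp add: kappa_def)
  qed
next
  case False
  then show ?thesis by (simp add: kappa_def)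
qed

lemma S_eq: "{x \<in> Dom a. kappa a x \<ge> enat k} = Sk a k"
  by (simp add: Sk_def kappa_ge)

lemma Tinv_eq: "Tinv a n z = {x \<in> Sk a n. (Ta a ^^ n) x = z}"
  by (auto simp: Tinv_def Sk_def kappa_ge)

lemma Sk_mono: "i \<le> j \<Longrightarrow> Sk a j \<subseteq> Sk a i"
  by (auto simp: Sk_def)


lemma aff:
  assumes "a > 0" "\<forall>i<j. \<forall>x\<in>J. \<forall>x'\<in>J. br a ((Ta a ^^ i) x) = br a ((Ta a ^^ i) x')"
  shows "\<exists>c>0. \<exists>d. \<forall>x\<in>J. (Ta a ^^ j) x = c*x + d"
  using assms(2)
proof (induction j)
  case 0
  show ?case by (rule exI[of _ 1]) simp
next
  case (Suc j)
  have "\<forall>i<j. \<forall>x\<in>J. \<forall>x'\<in>J. br a ((Ta a ^^ i) x) = br a ((Ta a ^^ i) x')"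
    using Suc.prems less_SucI by blast
  then obtain c d where cd: "c > 0" "\<And>x. x\<in>J \<Longrightarrow> (Ta a ^^ j) x = c*x + d"
    using Suc.IH by metis
  have P: "\<And>x x'. x\<in>J \<Longrightarrow> x'\<in>J \<Longrightarrow> br a ((Ta a ^^ j) x) = br a ((Ta a ^^ j) x')"
    using Suc.prems lessI by blast
  have ca: "c/a > 0" using cd(1) assms(1) by simp
  show ?case
  proof (cases "\<exists>x0\<in>J. br a ((Ta a ^^ j) x0)")
    case True
    then obtain x0 where x0: "x0 \<in> J" "br a ((Ta a ^^ j) x0)" by auto
    have "\<forall>x\<in>J. (Ta a ^^ Suc j) x = (c/a)*x + (d+1)/a"
    proof
      fix x assume x: "x \<in> J"
      then have b: "br a ((Ta a ^^ j) x)" using P[OF x x0(1)] x0(2) by simp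
      have "(Ta a ^^ Suc j) x = Ta a ((Ta a ^^ j) x)" by simp
      also have "\<dots> = ((Ta a ^^ j) x + 1)/a" using b by (simp only: Ta_br if_True)
      also have "\<dots> = (c/a)*x + (d+1)/a" using cd(2)[OF x] by (simp add: add_divide_distrib)
      finally show "(Ta a ^^ Suc j) x = (c/a)*x + (d+1)/a" .
    qed
    then show ?thesis using ca by (intro exI[of _ "c/a"]) (simp only: simp_thms, blast)
  next
    case False
    have "\<forall>x\<in>J. (Ta a ^^ Suc j) x = (c/a)*x + (d-1)/a"
    proof
      fix x assume x: "x \<in> J"
      then have b: "\<not> br a ((Ta a ^^ j) x)" using False by blast
      have "(Ta a ^^ Suc j) x = Ta a ((Ta a ^^ j) x)" by simp
      also have "\<dots> = ((Ta a ^^ j) x - 1)/a" using b by (simp only: Ta_br if_False)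
      also have "\<dots> = (c/a)*x + (d-1)/a" using cd(2)[OF x] by (simp add: diff_divide_distrib add_divide_distrib)
      finally show "(Ta a ^^ Suc j) x = (c/a)*x + (d-1)/a" .
    qed
    then show ?thesis using ca by (intro exI[of _ "c/a"]) (simp only: simp_thms, blast)
  qed
qed

lemma Ta_Dom:
  assumes "1/2 \<le> a" "a \<le> 2/3" "x \<in> Dom a" "x \<notin> Ia a"
  shows "Ta a x \<in> Dom a"
proof -
  have a1: "1 - a > 0" using assms by simp
  have x: "0 \<le> x" "x \<le> 1/(1-a)" using assms(3) by (auto simp: Dom_def)
  show ?thesis
  proof (cases "br a x")
    case True
    then have "x \<le> (2*a-1)/(1-a)" by (simp add: br_def)
    then have "x * (1-a) \<le> 2*a - 1" using a1 by (simp add: pos_le_divide_eq)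
    then have "(x+1)/a \<le> 1/(1-a)" using a1 assms(1)
      by (simp add: divide_simps) (simp add: algebra_simps)
    then show ?thesis using True x assms(1) by (simp add: Ta_br Dom_def)
  next
    case False
    then have "x \<ge> 1" using assms(4) by (auto simp: br_def Ia_def)
    have "x * (1-a) \<le> 1" using x a1 by (simp add: pos_le_divide_eq mult.commute)
    then have "(x-1)/a \<le> 1/(1-a)" using a1 assms(1)
      by (simp add: divide_simps) (simp add: algebra_simps)
    then show ?thesis using False \<open>x \<ge> 1\<close> assms(1) by (simp add: Ta_br Dom_def)
  qed
qed

lemma Sk_Dom:
  assumes "1/2 \<le> a" "a \<le> 2/3" "x \<in> Sk a j" "i \<le> j"
  shows "(Ta a ^^ i) x \<in> Dom a"
  using assms(4)
proof (induction i)
  case 0 then show ?case using assms(3) by (simp add: Sk_def)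
next
  case (Suc i)
  have "(Ta a ^^ i) x \<notin> Ia a" using assms(3) Suc.prems by (simp add: Sk_def)
  then show ?case using Suc Ta_Dom assms(1,2) by simp
qed

lemma Ta_zero:
  assumes "1/2 \<le> a" "w \<in> Dom a" "w \<notin> Ia a" "Ta a w = 0"
  shows "w = 1"
proof (cases "br a w")
  case True
  then have "w = -1" using assms by (simp add: Ta_br divide_eq_0_iff)
  then show ?thesis using assms(2) by (simp add: Dom_def)
next
  case False
  then show ?thesis using assms by (simp add: Ta_br)
qed

lemma fin_pre:
  assumes "a \<noteq> 0"
  shows "finite {x. (Ta a ^^ n) x = z}"
proof (induction n)
  case 0 then show ?case by simp
next
  case (Suc n)
  let ?F = "{x. (Ta a ^^ n) x = z}"
  have "{x. (Ta a ^^ Suc n) x = z} \<subseteq> (\<lambda>w. a*w-1) ` ?F \<union> (\<lambda>w. a*w+1) ` ?F"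
  proof
    fix x assume "x \<in> {x. (Ta a ^^ Suc n) x = z}"
    then have h: "Ta a x \<in> ?F" by (simp add: funpow_Suc_right del: funpow.simps)
    show "x \<in> (\<lambda>w. a*w-1) ` ?F \<union> (\<lambda>w. a*w+1) ` ?F"
    proof (cases "br a x")
      case True
      then have "x = a * Ta a x - 1" using assms by (simp add: Ta_br)
      then show ?thesis using h by blast
    next
      case False
      then have "x = a * Ta a x + 1" using assms by (simp add: Ta_br)
      then show ?thesis using h by blast
    qed
  qed
  then show ?case using Suc by (meson finite_Un finite_imageI finite_subset)
qed


abbreviation bb :: "real \<Rightarrow> real" where "bb a \<equiv> (2*a-1)/(1-a)"

lemma bb_bounds:
  assumes "1/2 < a" "a < 2/3"
  shows "0 < bb a" "bb a < 1"
proof -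
  have "1 - a > 0" using assms by simp
  then show "0 < bb a" using assms by simp
  show "bb a < 1" using \<open>1 - a > 0\<close> assms by (simp add: divide_less_eq)
qed

lemma Sk_Suc: "Sk a (Suc j) = {x \<in> Sk a j. (Ta a ^^ j) x \<notin> Ia a}"
  by (auto simp: Sk_def less_Suc_eq)

lemma Sk_Suc_D: "x \<in> Sk a k \<Longrightarrow> j < k \<Longrightarrow> (Ta a ^^ j) x \<notin> Ia a"
  by (simp add: Sk_def)

lemma notIa_br:
  assumes "bb a < 1" "y \<notin> Ia a"
  shows "br a y \<longleftrightarrow> y \<le> bb a" "y < 1 \<longleftrightarrow> y \<le> bb a"
  using assms by (auto simp: br_def Ia_def)

lemma affine_props:
  fixes f :: "real \<Rightarrow> real"
  assumes "\<forall>x\<in>J. f x = c*x+d" "c > 0"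
  shows "continuous_on J f" "strict_mono_on J f"
proof -
  have "continuous_on J (\<lambda>x. c*x+d)" by (auto intro!: continuous_intros)
  moreover have "continuous_on J f \<longleftrightarrow> continuous_on J (\<lambda>x. c*x+d)"
    by (rule continuous_on_cong) (use assms(1) in auto)
  ultimately show "continuous_on J f" by simp
  show "strict_mono_on J f" unfolding strict_mono_on_def
  proof (intro allI impI)
    fix p q assume h: "p \<in> J \<and> q \<in> J \<and> p < q"
    then have "c*p < c*q" using assms(2) by simp
    then show "f p < f q" using h assms(1) by simp
  qed
qed

lemma L1:
  assumes "1/2 < a" "a < 2/3" "{u..v} \<subseteq> Sk a j"
  shows "\<forall>i<j. \<forall>x\<in>{u..v}. \<forall>x'\<in>{u..v}. br a ((Ta a ^^ i) x) = br a ((Ta a ^^ i) x')"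
  using assms(3)
proof (induction j)
  case 0
  then show ?case by simp
next
  case (Suc j)
  have b: "0 < bb a" "bb a < 1" using bb_bounds assms(1,2) by auto
  have sub: "{u..v} \<subseteq> Sk a j" by (rule subset_trans[OF Suc.prems Sk_mono]) simp
  have IH: "\<forall>i<j. \<forall>x\<in>{u..v}. \<forall>x'\<in>{u..v}. br a ((Ta a ^^ i) x) = br a ((Ta a ^^ i) x')"
    using Suc.IH sub by blast
  have a0: "a > 0" using assms(1) by simp
  obtain c d where cd: "c > 0" "\<And>x. x\<in>{u..v} \<Longrightarrow> (Ta a ^^ j) x = c*x + d"
    using aff[OF a0 IH] by metis
  have nI: "\<And>x. x \<in> {u..v} \<Longrightarrow> (Ta a ^^ j) x \<notin> Ia a"
    using Suc.prems by (meson Sk_Suc_D lessI subsetD)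
  have key: "br a ((Ta a ^^ j) x) = br a ((Ta a ^^ j) u)" if x: "x \<in> {u..v}" for x
  proof -
    have u: "u \<in> {u..v}" using x by auto
    have ex: "(Ta a ^^ j) x = c*x+d" "(Ta a ^^ j) u = c*u+d" using cd(2) x u by auto
    have m: "c*u + d \<le> c*x + d" using x cd(1) by auto
    have bx: "br a ((Ta a ^^ j) x) \<longleftrightarrow> c*x+d \<le> bb a" using notIa_br(1)[OF b(2) nI[OF x]] ex by simp
    have bu: "br a ((Ta a ^^ j) u) \<longleftrightarrow> c*u+d \<le> bb a" using notIa_br(1)[OF b(2) nI[OF u]] ex by simp
    show ?thesis
    proof (rule ccontr)
      assume "br a ((Ta a ^^ j) x) \<noteq> br a ((Ta a ^^ j) u)"
      then have h: "c*u+d \<le> bb a" "c*x+d > bb a" using bx bu m by auto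
      then have h1: "c*x+d \<ge> 1" using nI[OF x] ex by (auto simp: Ia_def)
      obtain B where B: "B = bb a" by simp
      define w where "w = ((B + 1)/2 - d)/c"
      have cw: "c*w+d = (B + 1)/2" using cd(1) by (simp add: w_def)
      have hB: "c*u+d \<le> B" "c*x+d > B" "B < 1" "0 < B" using h b B by auto
      have "c*u \<le> c*w" using cw hB by argo
      then have uw: "u \<le> w" using cd(1) by simp
      have "c*w \<le> c*x" using cw hB h1 by argo
      then have wx: "w \<le> x" using cd(1) by simp
      have w: "w \<in> {u..v}" using uw wx x by auto
      have "B < (B+1)/2" "(B+1)/2 < 1" using hB by auto
      then have "(Ta a ^^ j) w \<in> Ia a" using cd(2)[OF w] cw B by (simp add: Ia_def)
      then show False using nI[OF w] by simp
    qed
  qed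
  show ?case
  proof (intro allI impI ballI)
    fix i x x' assume i: "i < Suc j" and x: "x \<in> {u..v}" and x': "x' \<in> {u..v}"
    show "br a ((Ta a ^^ i) x) = br a ((Ta a ^^ i) x')"
    proof (cases "i < j")
      case True then show ?thesis using IH x x' by blast
    next
      case False
      then have "i = j" using i by simp
      then show ?thesis using key[OF x] key[OF x'] by simp
    qed
  qed
qed

lemma L1aff:
  assumes "1/2 < a" "a < 2/3" "{u..v} \<subseteq> Sk a k" "j \<le> k"
  shows "\<exists>c>0. \<exists>d. \<forall>x\<in>{u..v}. (Ta a ^^ j) x = c*x + d"
proof -
  have H: "\<forall>i<j. \<forall>x\<in>{u..v}. \<forall>x'\<in>{u..v}. br a ((Ta a ^^ i) x) = br a ((Ta a ^^ i) x')"
  proof (intro allI impI)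
    fix i assume "i < j"
    then have "i < k" using assms(4) by simp
    then show "\<forall>x\<in>{u..v}. \<forall>x'\<in>{u..v}. br a ((Ta a ^^ i) x) = br a ((Ta a ^^ i) x')"
      using L1[OF assms(1-3)] by blast
  qed
  have a0: "a > 0" using assms(1) by simp
  show ?thesis by (rule aff[OF a0 H])
qed


lemma Dom_le: "x \<in> Dom a \<Longrightarrow> 0 \<le> x \<and> x \<le> 1/(1-a)"
  by (simp add: Dom_def)

lemma Sk_Dom0: "x \<in> Sk a j \<Longrightarrow> x \<in> Dom a"
  by (simp add: Sk_def)

lemma br_at:
  assumes "1/2 < a" "a < 2/3" "{u..v} \<subseteq> Sk a k" "i < k" "x \<in> {u..v}" "x' \<in> {u..v}"
  shows "br a ((Ta a ^^ i) x) = br a ((Ta a ^^ i) x')"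
  using L1[OF assms(1-3)] assms(4-6) by blast

lemma L3:
  assumes "1/2 < a" "a < 2/3" "{u..v} \<subseteq> Sk a k" "u < v" "x \<in> {u..<v}"
  shows "x \<notin> Dk a k"
proof
  assume xD: "x \<in> Dk a k"
  have b: "0 < bb a" "bb a < 1" using bb_bounds assms(1,2) by auto
  have vS: "v \<in> Sk a k" using assms(3,4) by auto
  have xS: "x \<in> {u..v}" using assms(5) by auto
  show False
  proof (cases "x = 1/(1-a)")
    case True
    have "v \<le> 1/(1-a)" using Dom_le[OF Sk_Dom0[OF vS]] by simp
    then show False using True assms(5) by simp
  next
    case False
    then obtain n where n: "n < k" "x \<in> Tinv a n (bb a)" using xD by (auto simp: Dk_def)
    then have Tx: "(Ta a ^^ n) x = bb a" by (simp add: Tinv_def)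
    obtain c d where cd: "c > 0" "\<forall>y\<in>{u..v}. (Ta a ^^ n) y = c*y + d"
      using L1aff[OF assms(1-3), of n] n(1) by auto
    have "c*x < c * v" using cd(1) assms(5) by simp
    then have "(Ta a ^^ n) v > bb a" using cd(2) xS assms(4) Tx by auto
    moreover have "(Ta a ^^ n) v \<notin> Ia a" using Sk_Suc_D[OF vS n(1)] .
    ultimately have "\<not> br a ((Ta a ^^ n) v)" using notIa_br(1)[OF b(2)] by auto
    moreover have "br a ((Ta a ^^ n) x)" using Tx b by (simp add: br_def)
    ultimately show False using br_at[OF assms(1-3) n(1) xS, of v] assms(4) by auto
  qed
qed

lemma L4:
  assumes "1/2 < a" "a < 2/3" "{u..v} \<subseteq> Sk a k" "u < v" "x \<in> {u<..v}"
  shows "x \<notin> Gk a k"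
proof
  assume xG: "x \<in> Gk a k"
  have b: "0 < bb a" "bb a < 1" using bb_bounds assms(1,2) by auto
  have uS: "u \<in> Sk a k" using assms(3,4) by auto
  have xS': "x \<in> {u..v}" using assms(5) by auto
  have xS: "x \<in> Sk a k" using xS' assms(3) by auto
  obtain n where n: "n \<le> k" "x \<in> Tinv a n 0" using xG by (auto simp: Gk_def)
  then have Tx: "(Ta a ^^ n) x = 0" by (simp add: Tinv_def)
  show False
  proof (cases n)
    case 0
    then have "x = 0" using Tx by simp
    moreover have "u \<ge> 0" using Dom_le[OF Sk_Dom0[OF uS]] by simp
    ultimately show False using assms(5) by simp
  next
    case (Suc m)
    have mk: "m < k" using n(1) Suc by simp
    have wD: "(Ta a ^^ m) x \<in> Dom a" using Sk_Dom[OF _ _ xS, of m] assms(1,2) mk by simp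
    have wI: "(Ta a ^^ m) x \<notin> Ia a" using Sk_Suc_D[OF xS mk] .
    have "Ta a ((Ta a ^^ m) x) = 0" using Tx Suc by simp
    then have w1: "(Ta a ^^ m) x = 1" using Ta_zero[OF _ wD wI] assms(1) by simp
    obtain c d where cd: "c > 0" "\<forall>y\<in>{u..v}. (Ta a ^^ m) y = c*y + d"
      using L1aff[OF assms(1-3), of m] mk by auto
    have "c*u < c*x" using cd(1) assms(5) by simp
    then have "(Ta a ^^ m) u < 1" using cd(2) xS' assms(4) w1 by auto
    moreover have "(Ta a ^^ m) u \<notin> Ia a" using Sk_Suc_D[OF uS mk] .
    ultimately have "br a ((Ta a ^^ m) u)" using notIa_br[OF b(2)] by auto
    moreover have "\<not> br a ((Ta a ^^ m) x)" using w1 by (simp add: br_def)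
    ultimately show False using br_at[OF assms(1-3) mk xS', of u] assms(4) by auto
  qed
qed


lemma Sk0: "Sk a 0 = Dom a" by (simp add: Sk_def)

lemma L5:
  assumes "1/2 < a" "a < 2/3" "u \<le> v" "u \<in> Sk a k" "v \<in> Sk a k" "\<forall>x\<in>{u..<v}. x \<notin> Dk a k"
  shows "{u..v} \<subseteq> Sk a k"
proof -
  have b: "0 < bb a" "bb a < 1" using bb_bounds assms(1,2) by auto
  have "j \<le> k \<Longrightarrow> {u..v} \<subseteq> Sk a j" for j
  proof (induction j)
    case 0
    have "0 \<le> u" using Dom_le[OF Sk_Dom0[OF assms(4)]] by simp
    moreover have "v \<le> 1/(1-a)" using Dom_le[OF Sk_Dom0[OF assms(5)]] by simp
    ultimately show ?case by (auto simp: Sk0 Dom_def)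
  next
    case (Suc j)
    then have jk: "j < k" by simp
    have IH: "{u..v} \<subseteq> Sk a j" using Suc by simp
    obtain c d where cd: "c > 0" "\<forall>y\<in>{u..v}. (Ta a ^^ j) y = c*y + d"
      using L1aff[OF assms(1,2) IH, of j] by auto
    show ?case
    proof
      fix x assume x: "x \<in> {u..v}"
      have "(Ta a ^^ j) x \<notin> Ia a"
      proof
        assume xI: "(Ta a ^^ j) x \<in> Ia a"
        obtain B where B: "B = bb a" by simp
        have u: "u \<in> {u..v}" using assms(3) by simp
        have uI: "(Ta a ^^ j) u \<notin> Ia a" using Sk_Suc_D[OF assms(4) jk] .
        have "c*u \<le> c*x" using cd(1) x by simp
        then have "(Ta a ^^ j) u \<le> (Ta a ^^ j) x" using cd(2) x u by simp
        moreover have "(Ta a ^^ j) x < 1" "(Ta a ^^ j) x > B" using xI B by (auto simp: Ia_def)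
        ultimately have hu: "c*u+d \<le> B" "c*x+d > B" using uI B cd(2) x u by (auto simp: Ia_def)
        define w where "w = (B - d)/c"
        have cw: "c*w+d = B" using cd(1) by (simp add: w_def)
        have "c*u \<le> c*w" using cw hu by argo
        then have uw: "u \<le> w" using cd(1) by simp
        have "c*w < c*x" using cw hu by argo
        then have wx: "w < x" using cd(1) by simp
        have w: "w \<in> {u..v}" "w \<in> {u..<v}" using uw wx x by auto
        have "w \<in> Sk a j" using IH w(1) by auto
        moreover have "(Ta a ^^ j) w = bb a" using cd(2) w(1) cw B by simp
        ultimately have "w \<in> Tinv a j (bb a)" by (simp add: Tinv_eq)
        then have "w \<in> Dk a k" using jk by (auto simp: Dk_def)
        then show False using assms(6) w(2) by blast
      qed
      then show "x \<in> Sk a (Suc j)" using IH x by (auto simp: Sk_Suc)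
    qed
  qed
  then show ?thesis by simp
qed

lemma L6:
  assumes "1/2 < a" "a < 2/3" "x \<in> Sk a j"
  shows "\<exists>g. g \<in> Sk a j \<and> (\<exists>n\<le>j. (Ta a ^^ n) g = 0) \<and> g \<le> x \<and> {g..x} \<subseteq> Sk a j"
  using assms(3)
proof (induction j)
  case 0
  have "0 \<le> x" using Dom_le[OF Sk_Dom0[OF "0.prems"]] by simp
  moreover have "{0..x} \<subseteq> Dom a" using "0.prems" by (auto simp: Sk0 Dom_def)
  moreover have "0 \<in> Dom a" using calculation by auto
  ultimately show ?case by (intro exI[of _ 0]) (auto simp: Sk0)
next
  case (Suc j)
  have b: "0 < bb a" "bb a < 1" using bb_bounds assms(1,2) by auto
  have xj: "x \<in> Sk a j" using Suc.prems by (simp add: Sk_Suc)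
  have xI: "(Ta a ^^ j) x \<notin> Ia a" using Suc.prems by (simp add: Sk_Suc)
  obtain g n where g: "g \<in> Sk a j" "n \<le> j" "(Ta a ^^ n) g = 0" "g \<le> x" "{g..x} \<subseteq> Sk a j"
    using Suc.IH[OF xj] by blast
  obtain c d where cd: "c > 0" "\<forall>y\<in>{g..x}. (Ta a ^^ j) y = c*y + d"
    using L1aff[OF assms(1,2) g(5), of j] by auto
  have gg: "g \<in> {g..x}" "x \<in> {g..x}" using g(4) by auto
  have keep: ?case if all: "\<forall>y\<in>{g..x}. (Ta a ^^ j) y \<notin> Ia a"
  proof -
    have "{g..x} \<subseteq> Sk a (Suc j)" using all g(5) by (auto simp: Sk_Suc)
    moreover have "n \<le> Suc j" using g(2) by simp
    ultimately show ?thesis using g gg by blast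
  qed
  show ?case
  proof (cases "(Ta a ^^ j) x \<le> bb a")
    case True
    have "\<forall>y\<in>{g..x}. (Ta a ^^ j) y \<notin> Ia a"
    proof
      fix y assume y: "y \<in> {g..x}"
      have "c*y \<le> c*x" using y cd(1) by simp
      then have "(Ta a ^^ j) y \<le> bb a" using cd(2) y gg True by simp
      then show "(Ta a ^^ j) y \<notin> Ia a" by (simp add: Ia_def)
    qed
    then show ?thesis by (rule keep)
  next
    case False
    then have x1: "(Ta a ^^ j) x \<ge> 1" using xI by (auto simp: Ia_def)
    show ?thesis
    proof (cases "(Ta a ^^ j) g \<ge> 1")
      case True
      have "\<forall>y\<in>{g..x}. (Ta a ^^ j) y \<notin> Ia a"
      proof
        fix y assume y: "y \<in> {g..x}"
        have "c*g \<le> c*y" using y cd(1) by simp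
        then have "(Ta a ^^ j) y \<ge> 1" using cd(2) y gg True by simp
        then show "(Ta a ^^ j) y \<notin> Ia a" by (simp add: Ia_def)
      qed
      then show ?thesis by (rule keep)
    next
      case False
      define w where "w = (1 - d)/c"
      have cw: "c*w+d = 1" using cd(1) by (simp add: w_def)
      have hg: "c*g+d < 1" "c*x+d \<ge> 1" using False x1 cd(2) gg by auto
      have "c*g < c*w" using cw hg by argo
      then have gw: "g < w" using cd(1) by simp
      have "c*w \<le> c*x" using cw hg by argo
      then have wx: "w \<le> x" using cd(1) by simp
      have sub: "{w..x} \<subseteq> {g..x}" using gw by auto
      have "{w..x} \<subseteq> Sk a (Suc j)"
      proof
        fix y assume y: "y \<in> {w..x}"
        then have y': "y \<in> {g..x}" using sub by auto
        have "c*w \<le> c*y" using y cd(1) by simp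
        then have "(Ta a ^^ j) y \<ge> 1" using cd(2) y' cw by simp
        then have "(Ta a ^^ j) y \<notin> Ia a" by (simp add: Ia_def)
        then show "y \<in> Sk a (Suc j)" using y' g(5) by (auto simp: Sk_Suc)
      qed
      moreover have "w \<in> {w..x}" using wx by simp
      moreover have "(Ta a ^^ Suc j) w = 0"
      proof -
        have "w \<in> {g..x}" using gw wx by simp
        then have "(Ta a ^^ j) w = 1" using cd(2) cw by simp
        then show ?thesis by (simp add: Ta_def)
      qed
      ultimately show ?thesis using wx by blast
    qed
  qed
qed


lemma Ta_fix:
  assumes "0 < a" "a < 1"
  shows "Ta a (1/(1-a)) = 1/(1-a)"
proof -
  have a1: "1 - a > 0" using assms by simp
  have "1/(1-a) > 1" using assms by (simp add: divide_simps)
  then have "\<not> br a (1/(1-a))" by (simp add: br_def)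
  moreover have "(1/(1-a) - 1)/a = 1/(1-a)" using assms a1 by (simp add: divide_simps)
  ultimately show ?thesis by (simp add: Ta_br)
qed

lemma funpow_fix: "f z = z \<Longrightarrow> (f ^^ m) z = z"
  by (induction m) simp_all

lemma Ta_bb:
  assumes "1/2 < a" "a < 2/3"
  shows "Ta a (bb a) = 1/(1-a)"
proof -
  have b: "0 < bb a" "bb a < 1" using bb_bounds assms by auto
  have a1: "1 - a > 0" using assms by simp
  have "br a (bb a)" using b by (simp add: br_def)
  moreover have "(bb a + 1)/a = 1/(1-a)" using assms a1 by (simp add: divide_simps)
  ultimately show ?thesis by (simp add: Ta_br)
qed

lemma Dk_sub:
  assumes "1/2 < a" "a < 2/3" "y \<in> Dk a k"
  shows "y \<in> Sk a k"
proof -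
  have b: "0 < bb a" "bb a < 1" using bb_bounds assms(1,2) by auto
  have a1: "1 - a > 0" using assms by simp
  have big: "1/(1-a) > 1" using assms a1 by (simp add: divide_simps)
  have fx: "Ta a (1/(1-a)) = 1/(1-a)" using Ta_fix assms(1,2) by simp
  have bigI: "1/(1-a) \<notin> Ia a" using big by (simp add: Ia_def)
  show ?thesis
  proof (cases "y = 1/(1-a)")
    case True
    have "y \<in> Dom a" using True a1 by (simp add: Dom_def)
    moreover have "\<forall>i<k. (Ta a ^^ i) y \<notin> Ia a" using True funpow_fix[of "Ta a", OF fx] bigI by simp
    ultimately show ?thesis by (simp add: Sk_def)
  next
    case False
    then obtain n where n: "n < k" "y \<in> Tinv a n (bb a)" using assms(3) by (auto simp: Dk_def)
    then have yS: "y \<in> Sk a n" and Ty: "(Ta a ^^ n) y = bb a" by (auto simp: Tinv_eq)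
    have "(Ta a ^^ i) y \<notin> Ia a" for i
    proof (cases "i < n")
      case True then show ?thesis using yS by (simp add: Sk_def)
    next
      case False
      then obtain m where m: "i = m + n" by (metis add.commute le_add_diff_inverse not_less)
      have e: "(Ta a ^^ i) y = (Ta a ^^ m) (bb a)" using m Ty by (simp add: funpow_add)
      show ?thesis
      proof (cases m)
        case 0 then show ?thesis using e b by (simp add: Ia_def)
      next
        case (Suc m')
        have "(Ta a ^^ m) (bb a) = (Ta a ^^ m') (Ta a (bb a))" using Suc by (simp add: funpow_Suc_right del: funpow.simps)
        also have "\<dots> = 1/(1-a)" using Ta_bb[OF assms(1,2)] funpow_fix[of "Ta a", OF fx] by simp
        finally show ?thesis using e bigI by simp
      qed
    qed
    then show ?thesis using yS by (simp add: Sk_def)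
  qed
qed

lemma fin_Dk:
  assumes "a \<noteq> 0"
  shows "finite (Dk a k)"
proof -
  have "Dk a k \<subseteq> (\<Union>n<k. {x. (Ta a ^^ n) x = bb a}) \<union> {1/(1-a)}"
    by (auto simp: Dk_def Tinv_def)
  moreover have "finite ((\<Union>n<k. {x. (Ta a ^^ n) x = bb a}) \<union> {1/(1-a)})"
    using fin_pre[OF assms] by auto
  ultimately show ?thesis by (rule finite_subset)
qed

lemma fin_Gk:
  assumes "a \<noteq> 0"
  shows "finite (Gk a k)"
proof -
  have "Gk a k \<subseteq> (\<Union>n\<in>{0..k}. {x. (Ta a ^^ n) x = 0})"
    by (auto simp: Gk_def Tinv_def)
  moreover have "finite (\<Union>n\<in>{0..k}. {x. (Ta a ^^ n) x = 0})"
    using fin_pre[OF assms] by auto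
  ultimately show ?thesis by (rule finite_subset)
qed

lemma Gk_eq: "Gk a k = {g \<in> Sk a k. \<exists>n\<le>k. (Ta a ^^ n) g = 0}"
proof
  show "Gk a k \<subseteq> {g \<in> Sk a k. \<exists>n\<le>k. (Ta a ^^ n) g = 0}"
    by (auto simp: Gk_def S_eq Tinv_def)
next
  show "{g \<in> Sk a k. \<exists>n\<le>k. (Ta a ^^ n) g = 0} \<subseteq> Gk a k"
  proof
    fix g assume "g \<in> {g \<in> Sk a k. \<exists>n\<le>k. (Ta a ^^ n) g = 0}"
    then obtain n where g: "g \<in> Sk a k" "n \<le> k" "(Ta a ^^ n) g = 0" by auto
    then have "g \<in> Sk a n" using Sk_mono by blast
    then have "g \<in> Tinv a n 0" using g by (simp add: Tinv_eq)
    then show "g \<in> Gk a k" using g by (auto simp: Gk_def S_eq)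
  qed
qed

lemma gk_eq:
  assumes "1/2 < a" "a < 2/3" "g \<in> Gk a k" "g \<le> y" "{g..y} \<subseteq> Sk a k"
  shows "gk a k y = g"
proof -
  let ?M = "{z \<in> Gk a k. z \<le> y}"
  have a0: "a \<noteq> 0" using assms by auto
  have fM: "finite ?M" using fin_Gk[OF a0] by auto
  have gM: "g \<in> ?M" using assms by auto
  have MM: "Max ?M \<in> ?M" using fM gM Max_in by blast
  have gle: "g \<le> Max ?M" using fM gM by (rule Max_ge)
  show ?thesis
  proof (rule ccontr)
    assume "gk a k y \<noteq> g"
    then have "g < Max ?M" using gle by (simp add: gk_def)
    then have "Max ?M \<in> {g<..y}" using MM by auto
    moreover have "g < y" using \<open>g < Max ?M\<close> MM by auto
    ultimately have "Max ?M \<notin> Gk a k" using L4[OF assms(1,2,5)] by blast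
    then show False using MM by auto
  qed
qed

lemma comp:
  assumes "1/2 < a" "a < 2/3" "y \<in> Dk a k"
  shows "{gk a k y..y} \<subseteq> Sk a k \<and> gk a k y \<in> Gk a k \<and> gk a k y \<le> y"
proof -
  have yS: "y \<in> Sk a k" using Dk_sub[OF assms] .
  obtain g where g: "g \<in> Sk a k" "\<exists>n\<le>k. (Ta a ^^ n) g = 0" "g \<le> y" "{g..y} \<subseteq> Sk a k"
    using L6[OF assms(1,2) yS] by blast
  have gG: "g \<in> Gk a k" using g by (simp add: Gk_eq)
  have "gk a k y = g" using gk_eq[OF assms(1,2) gG g(3,4)] .
  then show ?thesis using g gG by simp
qed


lemma cover:
  assumes "1/2 < a" "a < 2/3" "x \<in> Sk a k"
  shows "\<exists>y\<in>Dk a k. x \<in> {gk a k y..y}"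
proof -
  have a0: "a \<noteq> 0" using assms by auto
  let ?DD = "{d \<in> Dk a k. x \<le> d}"
  have fin: "finite ?DD" using fin_Dk[OF a0] by auto
  have "1/(1-a) \<in> ?DD" using Dom_le[OF Sk_Dom0[OF assms(3)]] by (simp add: Dk_def)
  then have ne: "?DD \<noteq> {}" by blast
  define y where "y = Min ?DD"
  have yD: "y \<in> ?DD" using Min_in[OF fin ne] y_def by simp
  have noD: "\<forall>z\<in>{x..<y}. z \<notin> Dk a k"
  proof (intro ballI notI)
    fix z assume z: "z \<in> {x..<y}" "z \<in> Dk a k"
    then have "z \<in> ?DD" by auto
    then have "y \<le> z" using Min_le[OF fin] y_def by simp
    then show False using z by simp
  qed
  have yS: "y \<in> Sk a k" using Dk_sub[OF assms(1,2)] yD by simp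
  have xy: "{x..y} \<subseteq> Sk a k" using L5[OF assms(1,2) _ assms(3) yS noD] yD by simp
  obtain g where g: "g \<in> Sk a k" "\<exists>n\<le>k. (Ta a ^^ n) g = 0" "g \<le> x" "{g..x} \<subseteq> Sk a k"
    using L6[OF assms(1,2,3)] by blast
  have gG: "g \<in> Gk a k" using g by (simp add: Gk_eq)
  have "{g..y} \<subseteq> {g..x} \<union> {x..y}" by auto
  then have gy: "{g..y} \<subseteq> Sk a k" using xy g(4) by blast
  have "gk a k y = g" using gk_eq[OF assms(1,2) gG _ gy] g(3) yD by simp
  then show ?thesis using yD g(3) by auto
qed

lemma disj_lt:
  assumes "1/2 < a" "a < 2/3" "y \<in> Dk a k" "y' \<in> Dk a k" "y < y'"
  shows "{gk a k y..y} \<inter> {gk a k y'..y'} = {}"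
proof (rule ccontr)
  assume "{gk a k y..y} \<inter> {gk a k y'..y'} \<noteq> {}"
  then obtain z where z: "z \<in> {gk a k y..y}" "z \<in> {gk a k y'..y'}" by blast
  have c: "{gk a k y'..y'} \<subseteq> Sk a k" using comp[OF assms(1,2,4)] by simp
  have "y \<in> {gk a k y'..<y'}" using z assms(5) by auto
  moreover have "gk a k y' < y'" using z assms(5) by auto
  ultimately have "y \<notin> Dk a k" using L3[OF assms(1,2) c] by blast
  then show False using assms(3) by simp
qed

lemma partA:
  assumes "1/2 < a" "a < 2/3"
  shows "finite (Dk a k)
     \<and> {x \<in> Dom a. kappa a x \<ge> enat k} = (\<Union>y\<in>Dk a k. {gk a k y .. y})
     \<and> (\<forall>y\<in>Dk a k. \<forall>y'\<in>Dk a k. y \<noteq> y' \<longrightarrow> {gk a k y .. y} \<inter> {gk a k y' .. y'} = {})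
     \<and> gk a k ` Dk a k = Gk a k
     \<and> (\<forall>y\<in>Dk a k.
          (\<forall>j<k. \<forall>x\<in>{gk a k y .. y}. \<forall>x'\<in>{gk a k y .. y}. delta a j x = delta a j x')
        \<and> (\<forall>j\<in>{1..k}. continuous_on {gk a k y .. y} (Ta a ^^ j)
                       \<and> strict_mono_on {gk a k y .. y} (Ta a ^^ j)))"
proof -
  have a0: "a \<noteq> 0" using assms by auto
  have b: "0 < bb a" "bb a < 1" using bb_bounds assms by auto
  have P1: "finite (Dk a k)" using fin_Dk[OF a0] .
  have P2: "{x \<in> Dom a. kappa a x \<ge> enat k} = (\<Union>y\<in>Dk a k. {gk a k y .. y})"
  proof
    show "{x \<in> Dom a. kappa a x \<ge> enat k} \<subseteq> (\<Union>y\<in>Dk a k. {gk a k y .. y})"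
      using cover[OF assms] by (auto simp: S_eq)
    show "(\<Union>y\<in>Dk a k. {gk a k y .. y}) \<subseteq> {x \<in> Dom a. kappa a x \<ge> enat k}"
      using comp[OF assms] by (auto simp: S_eq)
  qed
  have P3: "\<forall>y\<in>Dk a k. \<forall>y'\<in>Dk a k. y \<noteq> y' \<longrightarrow> {gk a k y .. y} \<inter> {gk a k y' .. y'} = {}"
  proof (intro ballI impI)
    fix y y' assume y: "y \<in> Dk a k" "y' \<in> Dk a k" "y \<noteq> y'"
    show "{gk a k y .. y} \<inter> {gk a k y' .. y'} = {}"
    proof (cases "y < y'")
      case True then show ?thesis using disj_lt[OF assms y(1,2)] by simp
    next
      case False
      then have "y' < y" using y(3) by simp
      then show ?thesis using disj_lt[OF assms y(2,1)] by blast
    qed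
  qed
  have P4: "gk a k ` Dk a k = Gk a k"
  proof
    show "gk a k ` Dk a k \<subseteq> Gk a k" using comp[OF assms] by auto
    show "Gk a k \<subseteq> gk a k ` Dk a k"
    proof
      fix g assume gG: "g \<in> Gk a k"
      then have gS: "g \<in> Sk a k" by (simp add: Gk_eq)
      obtain y where y: "y \<in> Dk a k" "g \<in> {gk a k y..y}" using cover[OF assms gS] by blast
      have c: "{gk a k y..y} \<subseteq> Sk a k" using comp[OF assms y(1)] by simp
      have "gk a k y = g"
      proof (rule ccontr)
        assume "gk a k y \<noteq> g"
        then have "gk a k y < g" using y(2) by simp
        then have "g \<notin> Gk a k" using L4[OF assms c, of g] y(2) by auto
        then show False using gG by simp
      qed
      then show "g \<in> gk a k ` Dk a k" using y(1) by (metis image_eqI)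
    qed
  qed
  have P5: "\<forall>y\<in>Dk a k.
          (\<forall>j<k. \<forall>x\<in>{gk a k y .. y}. \<forall>x'\<in>{gk a k y .. y}. delta a j x = delta a j x')
        \<and> (\<forall>j\<in>{1..k}. continuous_on {gk a k y .. y} (Ta a ^^ j)
                       \<and> strict_mono_on {gk a k y .. y} (Ta a ^^ j))"
  proof
    fix y assume y: "y \<in> Dk a k"
    have c: "{gk a k y..y} \<subseteq> Sk a k" using comp[OF assms y] by simp
    have D: "\<forall>j<k. \<forall>x\<in>{gk a k y .. y}. \<forall>x'\<in>{gk a k y .. y}. delta a j x = delta a j x'"
    proof (intro allI impI ballI)
      fix j x x' assume j: "j < k" and x: "x \<in> {gk a k y .. y}" and x': "x' \<in> {gk a k y .. y}"
      have e: "br a ((Ta a ^^ j) x) = br a ((Ta a ^^ j) x')" using br_at[OF assms c j x x'] .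
      have nx: "(Ta a ^^ j) x \<notin> Ia a" using Sk_Suc_D[OF _ j] c x by blast
      have nx': "(Ta a ^^ j) x' \<notin> Ia a" using Sk_Suc_D[OF _ j] c x' by blast
      have "((Ta a ^^ j) x < 1) = ((Ta a ^^ j) x' < 1)"
        using e notIa_br[OF b(2) nx] notIa_br[OF b(2) nx'] by simp
      then show "delta a j x = delta a j x'" by (simp add: delta_def)
    qed
    have M: "\<forall>j\<in>{1..k}. continuous_on {gk a k y .. y} (Ta a ^^ j)
                       \<and> strict_mono_on {gk a k y .. y} (Ta a ^^ j)"
    proof
      fix j assume j: "j \<in> {1..k}"
      obtain c0 d0 where cd: "c0 > 0" "\<forall>x\<in>{gk a k y..y}. (Ta a ^^ j) x = c0*x + d0"
        using L1aff[OF assms c, of j] j by auto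
      show "continuous_on {gk a k y .. y} (Ta a ^^ j) \<and> strict_mono_on {gk a k y .. y} (Ta a ^^ j)"
        by (rule conjI[OF affine_props[OF cd(2,1)]])
    qed
    show "(\<forall>j<k. \<forall>x\<in>{gk a k y .. y}. \<forall>x'\<in>{gk a k y .. y}. delta a j x = delta a j x')
        \<and> (\<forall>j\<in>{1..k}. continuous_on {gk a k y .. y} (Ta a ^^ j)
                       \<and> strict_mono_on {gk a k y .. y} (Ta a ^^ j))" by (rule conjI[OF D M])
  qed
  show ?thesis by (intro conjI P1 P2 P3 P4 P5)
qed


lemma B_abs:
  fixes P :: "real set" and G :: "real \<Rightarrow> real"
  assumes fP: "finite P" and P0: "0 \<in> P" and P3: "P \<subseteq> {0..<3}"
    and Gd: "\<And>x. G x = Max {p \<in> P. p \<le> x}"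
    and Jd: "\<And>y. J y = (if y = 3 then {G 3 .. 3} else {Lim (at_left y) G ..< y})"
  shows "{0..3} = (\<Union>y\<in>(P - {0}) \<union> {3}. J y)"
    "\<forall>y\<in>(P - {0}) \<union> {3}. \<forall>y'\<in>(P - {0}) \<union> {3}. y \<noteq> y' \<longrightarrow> J y \<inter> J y' = {}"
    "(\<lambda>y. Lim (at_left y) G) ` ((P - {0}) \<union> {3} - {3}) \<union> {G 3} = P"
    "\<forall>y\<in>(P - {0}) \<union> {3}. J y \<subseteq> {0..3} \<and> (\<forall>x1\<in>J y. \<forall>x2\<in>J y. \<forall>w. x1 \<le> w \<and> w \<le> x2 \<longrightarrow> w \<in> J y)
          \<and> (\<forall>x1\<in>J y. \<forall>w\<in>J y. x1 < w \<longrightarrow> w \<notin> P)"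
proof -
  define pr where "pr y = Max {p \<in> P. p < y}" for y
  have prP: "pr y \<in> P" "pr y < y" if "y \<in> P - {0}" for y
  proof -
    have "0 \<in> {p \<in> P. p < y}" using that P0 P3 by force
    moreover have "finite {p \<in> P. p < y}" using fP by simp
    ultimately have "pr y \<in> {p \<in> P. p < y}" unfolding pr_def by (metis (no_types, lifting) Max_in empty_iff)
    then show "pr y \<in> P" "pr y < y" by auto
  qed
  have prM: "p \<le> pr y" if "y \<in> P - {0}" "p \<in> P" "p < y" for y p
    unfolding pr_def using fP that by (intro Max_ge) auto
  have G3: "G 3 = Max P"
  proof -
    have "{p \<in> P. p \<le> 3} = P" using P3 by auto
    then show ?thesis using Gd by simp
  qed
  have MP: "Max P \<in> P" using fP P0 Max_in by blast
  have MPge: "p \<le> Max P" if "p \<in> P" for p using fP that by simp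
  have Lim_eq: "Lim (at_left y) G = pr y" if y: "y \<in> P - {0}" for y
  proof -
    have ev: "eventually (\<lambda>x. x \<in> {pr y<..<y}) (at_left y)"
      using eventually_at_left_real prP(2)[OF y] by blast
    have Gx: "G x = pr y" if x: "x \<in> {pr y<..<y}" for x
    proof -
      have "{p \<in> P. p \<le> x} = {p \<in> P. p < y}"
      proof (intro set_eqI iffI)
        fix p assume "p \<in> {p \<in> P. p \<le> x}" then show "p \<in> {p \<in> P. p < y}" using x by auto
      next
        fix p assume h: "p \<in> {p \<in> P. p < y}"
        then have "p \<le> pr y" using prM[OF y] by blast
        then show "p \<in> {p \<in> P. p \<le> x}" using h x by auto
      qed
      then show ?thesis using Gd pr_def by simp
    qed
    have "eventually (\<lambda>x. G x = pr y) (at_left y)" by (rule eventually_mono[OF ev Gx])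
    then have "(G \<longlongrightarrow> pr y) (at_left y)" by (rule tendsto_eventually)
    then show ?thesis by (intro tendsto_Lim) simp_all
  qed
  have Jy: "J y = {pr y..<y}" if "y \<in> P - {0}" for y
  proof -
    have "y \<noteq> 3" using that P3 by auto
    then show ?thesis using Jd Lim_eq[OF that] by simp
  qed
  have J3: "J 3 = {Max P..3}" using Jd G3 by simp
  show "{0..3} = (\<Union>y\<in>(P - {0}) \<union> {3}. J y)"
  proof
    show "{0..3} \<subseteq> (\<Union>y\<in>(P - {0}) \<union> {3}. J y)"
    proof
      fix x :: real assume x: "x \<in> {0..3}"
      show "x \<in> (\<Union>y\<in>(P - {0}) \<union> {3}. J y)"
      proof (cases "Max P \<le> x")
        case True then show ?thesis using J3 x by auto
      next
        case False
        let ?Q = "{p \<in> P. x < p}"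
        have fQ: "finite ?Q" using fP by simp
        have nQ: "?Q \<noteq> {}" using False MP by auto
        define y where "y = Min ?Q"
        have yQ: "y \<in> ?Q" using Min_in[OF fQ nQ] y_def by simp
        have yP: "y \<in> P - {0}" using yQ x by auto
        have "pr y \<le> x"
        proof (rule ccontr)
          assume "\<not> pr y \<le> x"
          then have "pr y \<in> ?Q" using prP[OF yP] by auto
          then have "y \<le> pr y" using Min_le[OF fQ] y_def by simp
          then show False using prP(2)[OF yP] by simp
        qed
        then have "x \<in> J y" using Jy[OF yP] yQ by auto
        then show ?thesis using yP by blast
      qed
    qed
    show "(\<Union>y\<in>(P - {0}) \<union> {3}. J y) \<subseteq> {0..3}"
    proof
      fix x assume "x \<in> (\<Union>y\<in>(P - {0}) \<union> {3}. J y)"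
      then obtain y where y: "y \<in> (P - {0}) \<union> {3}" "x \<in> J y" by blast
      show "x \<in> {0..3}"
      proof (cases "y = 3")
        case True
        then show ?thesis using y J3 MP P3 by force
      next
        case False
        then have yP: "y \<in> P - {0}" using y by simp
        then show ?thesis using y(2) Jy[OF yP] prP[OF yP] P3 by force
      qed
    qed
  qed
  have low: "\<forall>x\<in>J y'. y \<le> x" if "y \<in> P - {0}" "y' \<in> (P - {0}) \<union> {3}" "y < y'" for y y'
  proof (cases "y' = 3")
    case True then show ?thesis using J3 MPge that by force
  next
    case False
    then have yP: "y' \<in> P - {0}" using that by simp
    have "y \<le> pr y'" using prM[OF yP, of y] that by simp
    then show ?thesis using Jy[OF yP] by auto
  qed
  have disj_lt: "J y \<inter> J y' = {}" if "y \<in> (P - {0}) \<union> {3}" "y' \<in> (P - {0}) \<union> {3}" "y < y'" for y y'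
  proof -
    have yP: "y \<in> P - {0}" using that P3 by auto
    have "\<forall>x\<in>J y. x < y" using Jy[OF yP] by auto
    then show ?thesis using low[OF yP that(2,3)] by force
  qed
  show "\<forall>y\<in>(P - {0}) \<union> {3}. \<forall>y'\<in>(P - {0}) \<union> {3}. y \<noteq> y' \<longrightarrow> J y \<inter> J y' = {}"
  proof (intro ballI impI)
    fix y y' assume h: "y \<in> (P - {0}) \<union> {3}" "y' \<in> (P - {0}) \<union> {3}" "y \<noteq> y'"
    show "J y \<inter> J y' = {}"
    proof (cases "y < y'")
      case True then show ?thesis using disj_lt[OF h(1,2)] by simp
    next
      case False then have "y' < y" using h(3) by simp
      then show ?thesis using disj_lt[OF h(2,1)] by blast
    qed
  qed
  have DD: "(P - {0}) \<union> {3} - {3} = P - {0}" using P3 by auto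
  show "(\<lambda>y. Lim (at_left y) G) ` ((P - {0}) \<union> {3} - {3}) \<union> {G 3} = P"
  proof
    show "(\<lambda>y. Lim (at_left y) G) ` ((P - {0}) \<union> {3} - {3}) \<union> {G 3} \<subseteq> P"
      using DD Lim_eq prP G3 MP by auto
    show "P \<subseteq> (\<lambda>y. Lim (at_left y) G) ` ((P - {0}) \<union> {3} - {3}) \<union> {G 3}"
    proof
      fix p assume pP: "p \<in> P"
      show "p \<in> (\<lambda>y. Lim (at_left y) G) ` ((P - {0}) \<union> {3} - {3}) \<union> {G 3}"
      proof (cases "p = Max P")
        case True then show ?thesis using G3 by simp
      next
        case False
        then have pl: "p < Max P" using MPge[OF pP] by simp
        let ?Q = "{q \<in> P. p < q}"
        have fQ: "finite ?Q" using fP by simp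
        have nQ: "?Q \<noteq> {}" using pl MP by auto
        define y where "y = Min ?Q"
        have yQ: "y \<in> ?Q" using Min_in[OF fQ nQ] y_def by simp
        have p0: "p \<ge> 0" using pP P3 by auto
        have yP: "y \<in> P - {0}" using yQ p0 by auto
        have "pr y = p"
        proof (rule antisym)
          show "p \<le> pr y" using prM[OF yP pP] yQ by simp
          show "pr y \<le> p"
          proof (rule ccontr)
            assume "\<not> pr y \<le> p"
            then have "pr y \<in> ?Q" using prP[OF yP] by auto
            then have "y \<le> pr y" using Min_le[OF fQ] y_def by simp
            then show False using prP(2)[OF yP] by simp
          qed
        qed
        then have e: "p = (\<lambda>y. Lim (at_left y) G) y" using Lim_eq[OF yP] by simp
        have "y \<in> (P - {0}) \<union> {3} - {3}" using yP DD by simp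
        with e have "p \<in> (\<lambda>y. Lim (at_left y) G) ` ((P - {0}) \<union> {3} - {3})"
          by (rule image_eqI)
        then show ?thesis by (rule UnI1)
      qed
    qed
  qed
  show "\<forall>y\<in>(P - {0}) \<union> {3}. J y \<subseteq> {0..3} \<and> (\<forall>x1\<in>J y. \<forall>x2\<in>J y. \<forall>w. x1 \<le> w \<and> w \<le> x2 \<longrightarrow> w \<in> J y)
          \<and> (\<forall>x1\<in>J y. \<forall>w\<in>J y. x1 < w \<longrightarrow> w \<notin> P)"
  proof
    fix y assume y: "y \<in> (P - {0}) \<union> {3}"
    have sub: "J y \<subseteq> {0..3}"
    proof (cases "y = 3")
      case True
      then show ?thesis using J3 MP P3 by auto
    next
      case False
      then have yP: "y \<in> P - {0}" using y by simp
      have "0 \<le> pr y" using prP(1)[OF yP] P3 by auto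
      moreover have "y \<le> 3" using yP P3 by auto
      ultimately show ?thesis using Jy[OF yP] by auto
    qed
    show "J y \<subseteq> {0..3} \<and> (\<forall>x1\<in>J y. \<forall>x2\<in>J y. \<forall>w. x1 \<le> w \<and> w \<le> x2 \<longrightarrow> w \<in> J y)
          \<and> (\<forall>x1\<in>J y. \<forall>w\<in>J y. x1 < w \<longrightarrow> w \<notin> P)"
    proof (cases "y = 3")
      case True
      have "\<forall>x1\<in>J y. \<forall>w\<in>J y. x1 < w \<longrightarrow> w \<notin> P" using True J3 MPge by force
      moreover have "\<forall>x1\<in>J y. \<forall>x2\<in>J y. \<forall>w. x1 \<le> w \<and> w \<le> x2 \<longrightarrow> w \<in> J y" using True J3 by auto
      ultimately show ?thesis using sub by blast
    next
      case False
      then have yP: "y \<in> P - {0}" using y by simp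
      have "\<forall>x1\<in>J y. \<forall>w\<in>J y. x1 < w \<longrightarrow> w \<notin> P"
        using Jy[OF yP] prM[OF yP] by force
      moreover have "\<forall>x1\<in>J y. \<forall>x2\<in>J y. \<forall>w. x1 \<le> w \<and> w \<le> x2 \<longrightarrow> w \<in> J y" using Jy[OF yP] by auto
      ultimately show ?thesis using sub by blast
    qed
  qed
qed


lemma a23: "bb (2/3::real) = 1" "Ia (2/3) = {}" "Dom (2/3) = {0..3}" "(1::real)/(1-2/3) = 3"
  by (auto simp: Ia_def Dom_def)

lemma Sk23: "Sk (2/3) j = {0..3}"
  by (auto simp: Sk_def a23)

lemma br23: "br (2/3) x \<longleftrightarrow> x < 1"
  by (auto simp: br_def)

lemma Ta23_1: "Ta (2/3) 1 = 0"
  by (simp add: Ta_def)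

lemma orbit23: "x \<in> {0..3} \<Longrightarrow> (Ta (2/3) ^^ n) x \<in> {0..3}"
  using Sk_Dom[of "2/3" x n n] by (simp add: Sk23 a23)

lemma T23_0_odd: "n \<ge> 1 \<Longrightarrow> \<exists>N::int. odd N \<and> (Ta (2/3) ^^ n) 0 = N / 2^n"
proof (induction n rule: dec_induct)
  case base
  have "(Ta (2/3) ^^ 1) 0 = 3/2" by (simp add: Ta_def)
  then show ?case by (intro exI[of _ 3]) simp
next
  case (step n)
  then obtain N :: int where N: "odd N" "(Ta (2/3) ^^ n) 0 = N / 2^n" by blast
  have ev: "even ((2::int)^n)" using step(1) by simp
  have "(Ta (2/3) ^^ Suc n) 0 = Ta (2/3) (N / 2^n)" using N by simp
  show ?case
  proof (cases "br (2/3) (N / 2^n)")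
    case True
    have "Ta (2/3) (N / 2^n) = (N/2^n + 1)/(2/3)" using True by (simp add: Ta_br)
    also have "\<dots> = of_int (3*(N + 2^n)) / 2^(Suc n)" by (simp add: field_simps)
    finally have "(Ta (2/3) ^^ Suc n) 0 = of_int (3*(N + 2^n)) / 2^(Suc n)"
      using \<open>(Ta (2/3) ^^ Suc n) 0 = Ta (2/3) (N / 2^n)\<close> by simp
    moreover have "odd (3*(N + 2^n))" using N(1) ev by simp
    ultimately show ?thesis by blast
  next
    case False
    have "Ta (2/3) (N / 2^n) = (N/2^n - 1)/(2/3)" using False by (simp add: Ta_br)
    also have "\<dots> = of_int (3*(N - 2^n)) / 2^(Suc n)" by (simp add: field_simps)
    finally have "(Ta (2/3) ^^ Suc n) 0 = of_int (3*(N - 2^n)) / 2^(Suc n)"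
      using \<open>(Ta (2/3) ^^ Suc n) 0 = Ta (2/3) (N / 2^n)\<close> by simp
    moreover have "odd (3*(N - 2^n))" using N(1) ev by simp
    ultimately show ?thesis by blast
  qed
qed

lemma T23_0: "(Ta (2/3) ^^ n) 0 \<noteq> 1"
proof (cases "n \<ge> 1")
  case True
  then obtain N :: int where N: "odd N" "(Ta (2/3) ^^ n) 0 = N / 2^n" using T23_0_odd by blast
  show ?thesis
  proof
    assume "(Ta (2/3) ^^ n) 0 = 1"
    then have "real_of_int N = 2^n" using N(2) by (simp add: divide_eq_1_iff)
    then have "N = 2^n" by (metis of_int_eq_iff of_int_numeral of_int_power)
    then show False using N(1) True by simp
  qed
next
  case False then have "n = 0" by simp
  then show ?thesis by simp
qed

lemma Gk23: "Gk (2/3) k = {x \<in> {0..3}. \<exists>n\<le>k. (Ta (2/3) ^^ n) x = 0}"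
  by (simp add: Gk_eq Sk23)

lemma Dk23: "Dk (2/3) k = (Gk (2/3) k - {0}) \<union> {3}"
proof
  show "Dk (2/3) k \<subseteq> (Gk (2/3) k - {0}) \<union> {3}"
  proof
    fix x assume x: "x \<in> Dk (2/3) k"
    show "x \<in> (Gk (2/3) k - {0}) \<union> {3}"
    proof (cases "x = 3")
      case True then show ?thesis by simp
    next
      case False
      then obtain n where n: "n < k" "x \<in> Tinv (2/3) n 1" using x by (auto simp: Dk_def a23)
      then have x03: "x \<in> {0..3}" and Tx: "(Ta (2/3) ^^ n) x = 1" by (auto simp: Tinv_eq Sk23)
      have "(Ta (2/3) ^^ Suc n) x = 0" using Tx Ta23_1 by simp
      moreover have "Suc n \<le> k" using n by simp
      ultimately have "x \<in> Gk (2/3) k" using x03 by (auto simp: Gk23)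
      moreover have "x \<noteq> 0" using Tx T23_0 by auto
      ultimately show ?thesis by simp
    qed
  qed
  show "(Gk (2/3) k - {0}) \<union> {3} \<subseteq> Dk (2/3) k"
  proof
    fix x assume x: "x \<in> (Gk (2/3) k - {0}) \<union> {3}"
    show "x \<in> Dk (2/3) k"
    proof (cases "x = 3")
      case True then show ?thesis by (simp add: Dk_def a23)
    next
      case False
      then have xG: "x \<in> Gk (2/3) k" "x \<noteq> 0" using x by auto
      then obtain n where n: "n \<le> k" "(Ta (2/3) ^^ n) x = 0" and x03: "x \<in> {0..3}" by (auto simp: Gk23)
      show ?thesis
      proof (cases n)
        case 0 then show ?thesis using n xG by simp
      next
        case (Suc m)
        have wD: "(Ta (2/3) ^^ m) x \<in> Dom (2/3)" using orbit23[OF x03] by (simp add: a23)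
        have "Ta (2/3) ((Ta (2/3) ^^ m) x) = 0" using n(2) Suc by simp
        then have "(Ta (2/3) ^^ m) x = 1" using Ta_zero[OF _ wD] by (simp add: a23)
        then have "x \<in> Tinv (2/3) m 1" using x03 by (simp add: Tinv_eq Sk23)
        moreover have "m < k" using n(1) Suc by simp
        ultimately show ?thesis by (auto simp: Dk_def a23)
      qed
    qed
  qed
qed

lemma dyn23:
  assumes conv: "\<forall>x1\<in>J. \<forall>x2\<in>J. \<forall>w. x1 \<le> w \<and> w \<le> x2 \<longrightarrow> w \<in> J"
    and sub: "J \<subseteq> {0..3}"
    and noP: "\<forall>x1\<in>J. \<forall>w\<in>J. x1 < w \<longrightarrow> w \<notin> Gk (2/3) k"
    and jk0: "j \<le> k"
  shows "\<forall>i<j. \<forall>x\<in>J. \<forall>x'\<in>J. br (2/3) ((Ta (2/3) ^^ i) x) = br (2/3) ((Ta (2/3) ^^ i) x')"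
  using jk0
proof (induction j)
  case 0 then show ?case by simp
next
  case (Suc j)
  have jk: "j < k" using Suc.prems by simp
  have IH: "\<forall>i<j. \<forall>x\<in>J. \<forall>x'\<in>J. br (2/3) ((Ta (2/3) ^^ i) x) = br (2/3) ((Ta (2/3) ^^ i) x')"
    using Suc.IH[OF less_imp_le[OF jk]] .
  have a0: "(2/3::real) > 0" by simp
  obtain c d where cd0: "c > 0" "\<forall>x\<in>J. (Ta (2/3) ^^ j) x = c*x + d"
    using aff[OF a0 IH] by blast
  have cd: "c > 0" "\<And>x. x\<in>J \<Longrightarrow> (Ta (2/3) ^^ j) x = c*x + d" using cd0 by auto
  have lt: "br (2/3) ((Ta (2/3) ^^ j) x) = br (2/3) ((Ta (2/3) ^^ j) x')"
    if x: "x \<in> J" "x' \<in> J" "x < x'" for x x'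
  proof (rule ccontr)
    assume ne: "br (2/3) ((Ta (2/3) ^^ j) x) \<noteq> br (2/3) ((Ta (2/3) ^^ j) x')"
    have "c*x < c*x'" using cd(1) x(3) by simp
    then have m: "c*x+d < c*x'+d" by simp
    have ne': "(c*x+d < 1) \<noteq> (c*x'+d < 1)" using ne cd(2)[OF x(1)] cd(2)[OF x(2)] by (simp add: br23)
    have h: "c*x+d < 1" "c*x'+d \<ge> 1" using ne' m by argo+
    define w where "w = (1 - d)/c"
    have cw: "c*w+d = 1" using cd(1) by (simp add: w_def)
    have "c*x < c*w" using cw h by argo
    then have xw: "x < w" using cd(1) by simp
    have "c*w \<le> c*x'" using cw h by argo
    then have wx: "w \<le> x'" using cd(1) by simp
    have wJ: "w \<in> J" using conv x(1,2) xw wx by (meson less_imp_le)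
    have w03: "w \<in> {0..3}" using wJ sub by blast
    have "(Ta (2/3) ^^ j) w = 1" using cd(2)[OF wJ] cw by simp
    then have T0: "(Ta (2/3) ^^ Suc j) w = 0" using Ta23_1 by simp
    have "Suc j \<le> k" using jk by simp
    then have "w \<in> Gk (2/3) k" using w03 T0 unfolding Gk23 by blast
    then show False using noP x(1) wJ xw by blast
  qed
  have all: "br (2/3) ((Ta (2/3) ^^ j) x) = br (2/3) ((Ta (2/3) ^^ j) x')" if "x \<in> J" "x' \<in> J" for x x'
  proof (cases "x < x'")
    case True then show ?thesis using lt that by blast
  next
    case False
    show ?thesis
    proof (cases "x = x'")
      case True then show ?thesis by simp
    next
      case False
      then have "x' < x" using \<open>\<not> x < x'\<close> by simp
      then show ?thesis using lt[of x' x] that by simp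
    qed
  qed
  show ?case
  proof (intro allI impI ballI)
    fix i x x' assume i: "i < Suc j" and x: "x \<in> J" "x' \<in> J"
    show "br (2/3) ((Ta (2/3) ^^ i) x) = br (2/3) ((Ta (2/3) ^^ i) x')"
    proof (cases "i < j")
      case True then show ?thesis using IH x by blast
    next
      case False then have "i = j" using i by simp
      then show ?thesis using all[OF x] by simp
    qed
  qed
qed


lemma partB:
  assumes "k \<ge> 1"
  shows "let a = (2/3::real);
         J = (\<lambda>y. if y = 3 then {gk a k 3 .. 3} else {Lim (at_left y) (gk a k) ..< y})
     in finite (Dk a k)
     \<and> {x \<in> Dom a. kappa a x \<ge> enat k} = (\<Union>y\<in>Dk a k. J y)
     \<and> (\<forall>y\<in>Dk a k. \<forall>y'\<in>Dk a k. y \<noteq> y' \<longrightarrow> J y \<inter> J y' = {})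
     \<and> (\<lambda>y. Lim (at_left y) (gk a k)) ` (Dk a k - {3}) \<union> {gk a k 3} = Gk a k
     \<and> (\<forall>y\<in>Dk a k.
          (\<forall>j<k. \<forall>x\<in>J y. \<forall>x'\<in>J y. delta a j x = delta a j x')
        \<and> (\<forall>j\<in>{1..k}. continuous_on (J y) (Ta a ^^ j)
                       \<and> strict_mono_on (J y) (Ta a ^^ j)))"
proof -
  define J where "J = (\<lambda>y. if y = 3 then {gk (2/3::real) k 3 .. 3} else {Lim (at_left y) (gk (2/3::real) k) ..< y})"
  have fP: "finite (Gk (2/3::real) k)" using fin_Gk by simp
  have P0: "0 \<in> Gk (2/3::real) k" unfolding Gk23 by auto
  have fx3: "(Ta (2/3::real) ^^ n) 3 = 3" for n
  proof -
    have "Ta (2/3::real) (1/(1-2/3)) = 1/(1-2/3)" by (rule Ta_fix) simp_all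
    then have "Ta (2/3::real) 3 = 3" by (simp add: a23)
    then show ?thesis by (rule funpow_fix)
  qed
  have P3: "Gk (2/3::real) k \<subseteq> {0..<3}"
  proof
    fix x assume "x \<in> Gk (2/3::real) k"
    then obtain n where x: "x \<in> {0..3}" "(Ta (2/3) ^^ n) x = 0" unfolding Gk23 by blast
    have "x \<noteq> 3" using x(2) fx3 by auto
    then show "x \<in> {0..<3}" using x(1) by simp
  qed
  have Gd: "\<And>x. gk (2/3::real) k x = Max {p \<in> Gk (2/3::real) k. p \<le> x}" by (simp add: gk_def)
  have Jd: "\<And>y. J y = (if y = 3 then {gk (2/3::real) k 3 .. 3} else {Lim (at_left y) (gk (2/3::real) k) ..< y})"
    by (simp add: J_def)
  note BA = B_abs[OF fP P0 P3 Gd Jd, folded Dk23]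
  have Q1: "finite (Dk (2/3::real) k)" using fin_Dk by simp
  have Q2: "{x \<in> Dom (2/3::real). kappa (2/3) x \<ge> enat k} = (\<Union>y\<in>Dk (2/3) k. J y)"
    using BA(1) by (simp add: S_eq Sk23)
  have Q5: "\<forall>y\<in>Dk (2/3::real) k.
          (\<forall>j<k. \<forall>x\<in>J y. \<forall>x'\<in>J y. delta (2/3) j x = delta (2/3) j x')
        \<and> (\<forall>j\<in>{1..k}. continuous_on (J y) (Ta (2/3) ^^ j)
                       \<and> strict_mono_on (J y) (Ta (2/3) ^^ j))"
  proof
    fix y assume y: "y \<in> Dk (2/3::real) k"
    have Jy: "J y \<subseteq> {0..3}" "\<forall>x1\<in>J y. \<forall>x2\<in>J y. \<forall>w. x1 \<le> w \<and> w \<le> x2 \<longrightarrow> w \<in> J y"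
          "\<forall>x1\<in>J y. \<forall>w\<in>J y. x1 < w \<longrightarrow> w \<notin> Gk (2/3) k"
      using BA(4) y by blast+
    have D: "\<forall>j<k. \<forall>x\<in>J y. \<forall>x'\<in>J y. delta (2/3) j x = delta (2/3) j x'"
    proof (intro allI impI ballI)
      fix j x x' assume j: "j < k" and x: "x \<in> J y" "x' \<in> J y"
      have "br (2/3) ((Ta (2/3) ^^ j) x) = br (2/3) ((Ta (2/3) ^^ j) x')"
        using dyn23[OF Jy(2,1,3) order_refl] j x by blast
      then have "((Ta (2/3) ^^ j) x < 1) = ((Ta (2/3) ^^ j) x' < 1)" by (simp only: br23)
      then show "delta (2/3) j x = delta (2/3) j x'" by (simp add: delta_def)
    qed
    have M: "\<forall>j\<in>{1..k}. continuous_on (J y) (Ta (2/3) ^^ j) \<and> strict_mono_on (J y) (Ta (2/3) ^^ j)"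
    proof
      fix j assume j: "j \<in> {1..k}"
      have H: "\<forall>i<j. \<forall>x\<in>J y. \<forall>x'\<in>J y. br (2/3) ((Ta (2/3) ^^ i) x) = br (2/3) ((Ta (2/3) ^^ i) x')"
        using dyn23[OF Jy(2,1,3), of j] j by (meson atLeastAtMost_iff)
      have a0: "(2/3::real) > 0" by simp
      obtain c d where cd: "c > 0" "\<forall>x\<in>J y. (Ta (2/3) ^^ j) x = c*x + d"
        using aff[OF a0 H] by blast
      show "continuous_on (J y) (Ta (2/3) ^^ j) \<and> strict_mono_on (J y) (Ta (2/3) ^^ j)"
        by (rule conjI[OF affine_props[OF cd(2,1)]])
    qed
    show "(\<forall>j<k. \<forall>x\<in>J y. \<forall>x'\<in>J y. delta (2/3) j x = delta (2/3) j x')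
        \<and> (\<forall>j\<in>{1..k}. continuous_on (J y) (Ta (2/3) ^^ j)
                       \<and> strict_mono_on (J y) (Ta (2/3) ^^ j))" by (rule conjI[OF D M])
  qed
  have main: "finite (Dk (2/3::real) k)
     \<and> {x \<in> Dom (2/3::real). kappa (2/3) x \<ge> enat k} = (\<Union>y\<in>Dk (2/3) k. J y)
     \<and> (\<forall>y\<in>Dk (2/3::real) k. \<forall>y'\<in>Dk (2/3) k. y \<noteq> y' \<longrightarrow> J y \<inter> J y' = {})
     \<and> (\<lambda>y. Lim (at_left y) (gk (2/3::real) k)) ` (Dk (2/3) k - {3}) \<union> {gk (2/3) k 3} = Gk (2/3) k
     \<and> (\<forall>y\<in>Dk (2/3::real) k.
          (\<forall>j<k. \<forall>x\<in>J y. \<forall>x'\<in>J y. delta (2/3) j x = delta (2/3) j x')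
        \<and> (\<forall>j\<in>{1..k}. continuous_on (J y) (Ta (2/3) ^^ j)
                       \<and> strict_mono_on (J y) (Ta (2/3) ^^ j)))"
    by (intro conjI Q1 Q2 BA(2) BA(3) Q5)
  show ?thesis using main unfolding J_def Let_def .
qed


theorem lemma3p3:
  fixes k :: nat
  assumes "k \<ge> 1"
  shows
   "(\<forall>a::real. 1/2 < a \<and> a < 2/3 \<longrightarrow>
       finite (Dk a k)
     \<and> {x \<in> Dom a. kappa a x \<ge> enat k} = (\<Union>y\<in>Dk a k. {gk a k y .. y})
     \<and> (\<forall>y\<in>Dk a k. \<forall>y'\<in>Dk a k. y \<noteq> y' \<longrightarrow> {gk a k y .. y} \<inter> {gk a k y' .. y'} = {})
     \<and> gk a k ` Dk a k = Gk a k
     \<and> (\<forall>y\<in>Dk a k.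
          (\<forall>j<k. \<forall>x\<in>{gk a k y .. y}. \<forall>x'\<in>{gk a k y .. y}. delta a j x = delta a j x')
        \<and> (\<forall>j\<in>{1..k}. continuous_on {gk a k y .. y} (Ta a ^^ j)
                       \<and> strict_mono_on {gk a k y .. y} (Ta a ^^ j))))
  \<and> (let a = (2/3::real);
         J = (\<lambda>y. if y = 3 then {gk a k 3 .. 3} else {Lim (at_left y) (gk a k) ..< y})
     in finite (Dk a k)
     \<and> {x \<in> Dom a. kappa a x \<ge> enat k} = (\<Union>y\<in>Dk a k. J y)
     \<and> (\<forall>y\<in>Dk a k. \<forall>y'\<in>Dk a k. y \<noteq> y' \<longrightarrow> J y \<inter> J y' = {})
     \<and> (\<lambda>y. Lim (at_left y) (gk a k)) ` (Dk a k - {3}) \<union> {gk a k 3} = Gk a k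
     \<and> (\<forall>y\<in>Dk a k.
          (\<forall>j<k. \<forall>x\<in>J y. \<forall>x'\<in>J y. delta a j x = delta a j x')
        \<and> (\<forall>j\<in>{1..k}. continuous_on (J y) (Ta a ^^ j)
                       \<and> strict_mono_on (J y) (Ta a ^^ j))))"
  apply (rule conjI)
   apply (intro allI impI)
   apply (rule partA; simp)
  apply (rule partB[OF assms])
  done

end
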